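(* Let $G$ be a graph with no induced $P_7$, $C_4$, $C_6$ or $C_7$, let $H=(B_1,\dots,B_5)$ be a nice blowup of $C_5$ in $G$, let $i\in\{1,\dots,5\}$, and let $K$ be a connected subgraph of $G[A_2(i)]$. If two vertices $u,v\in N(K)\cap A'_3(i+1)$ are non-adjacent, then $u$ and $v$ have a common neighbor in $K$.
   Context: Indices modulo $5$. A nice blowup of $C_5$ is a tuple $(B_1,\dots,B_5)$ of pairwise disjoint cliques such that every vertex of $B_j$ has a neighbor in $B_{j-1}$ and in $B_{j+1}$, $B_j$ is anticomplete to $B_{j+2}$, and there are no $a\in B_j$, distinct $b,c\in B_{j+1}$, $d\in B_{j+2}$ with $G[\{a,b,c,d\}]\cong P_4$; $V(H)=\bigcup B_j$. For $v\notin V(H)$, $\operatorname{supp}(v)$ is the set of $j$ such that $v$ has a neighbor in $B_j$. $A_2(i)=\{v\notin V(H):\operatorname{supp}(v)=\{i,i+1\}\}$, $A_3(j)=\{v\notin V(H):\operatorname{supp}(v)=\{j-1,j,j+1\}\}$, and $A'_3(j)=A_3(j)\cup B_j$. $N(K)$ is the set of vertices outside $K$ with a neighbor in $K$. *)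

theory Defs
  imports Main
begin

definition graph :: "'a set \<Rightarrow> ('a \<Rightarrow> 'a \<Rightarrow> bool) \<Rightarrow> bool" where
  "graph V E \<longleftrightarrow> finite V \<and> (\<forall>x y. E x y \<longrightarrow> x \<in> V \<and> y \<in> V)
     \<and> (\<forall>x y. E x y \<longrightarrow> E y x) \<and> (\<forall>x. \<not> E x x)"

definition induced_path :: "('a \<Rightarrow> 'a \<Rightarrow> bool) \<Rightarrow> (nat \<Rightarrow> 'a) \<Rightarrow> nat \<Rightarrow> bool" where
  "induced_path E f n \<longleftrightarrow> inj_on f {..<n} \<and>
     (\<forall>i<n. \<forall>j<n. E (f i) (f j) \<longleftrightarrow> (i + 1 = j \<or> j + 1 = i))"

definition induced_cycle :: "('a \<Rightarrow> 'a \<Rightarrow> bool) \<Rightarrow> (nat \<Rightarrow> 'a) \<Rightarrow> nat \<Rightarrow> bool" where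
  "induced_cycle E f n \<longleftrightarrow> inj_on f {..<n} \<and>
     (\<forall>i<n. \<forall>j<n. E (f i) (f j) \<longleftrightarrow> (j = (i + 1) mod n \<or> i = (j + 1) mod n))"

definition has_induced_P :: "'a set \<Rightarrow> ('a \<Rightarrow> 'a \<Rightarrow> bool) \<Rightarrow> nat \<Rightarrow> bool" where
  "has_induced_P V E n \<longleftrightarrow> (\<exists>f. f ` {..<n} \<subseteq> V \<and> induced_path E f n)"

definition has_induced_C :: "'a set \<Rightarrow> ('a \<Rightarrow> 'a \<Rightarrow> bool) \<Rightarrow> nat \<Rightarrow> bool" where
  "has_induced_C V E n \<longleftrightarrow> (\<exists>f. f ` {..<n} \<subseteq> V \<and> induced_cycle E f n)"

definition induces_P4 :: "('a \<Rightarrow> 'a \<Rightarrow> bool) \<Rightarrow> 'a set \<Rightarrow> bool" where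
  "induces_P4 E S \<longleftrightarrow> (\<exists>f. f ` {..<4} = S \<and> induced_path E f 4)"

definition is_clique :: "('a \<Rightarrow> 'a \<Rightarrow> bool) \<Rightarrow> 'a set \<Rightarrow> bool" where
  "is_clique E S \<longleftrightarrow> (\<forall>x\<in>S. \<forall>y\<in>S. x \<noteq> y \<longrightarrow> E x y)"

definition anticomplete :: "('a \<Rightarrow> 'a \<Rightarrow> bool) \<Rightarrow> 'a set \<Rightarrow> 'a set \<Rightarrow> bool" where
  "anticomplete E X Y \<longleftrightarrow> (\<forall>x\<in>X. \<forall>y\<in>Y. \<not> E x y)"

text \<open>Nice blowup of C_5, with the blobs indexed by 0..4 (indices mod 5).\<close>
definition nice_blowup_C5 :: "'a set \<Rightarrow> ('a \<Rightarrow> 'a \<Rightarrow> bool) \<Rightarrow> (nat \<Rightarrow> 'a set) \<Rightarrow> bool" where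
  "nice_blowup_C5 V E B \<longleftrightarrow>
     (\<forall>j<5. B j \<subseteq> V) \<and>
     (\<forall>j<5. \<forall>k<5. j \<noteq> k \<longrightarrow> B j \<inter> B k = {}) \<and>
     (\<forall>j<5. is_clique E (B j)) \<and>
     (\<forall>j<5. \<forall>x\<in>B j. (\<exists>y\<in>B ((j + 4) mod 5). E x y) \<and> (\<exists>y\<in>B ((j + 1) mod 5). E x y)) \<and>
     (\<forall>j<5. anticomplete E (B j) (B ((j + 2) mod 5))) \<and>
     (\<forall>j<5. \<not> (\<exists>a b c d. a \<in> B j \<and> b \<in> B ((j + 1) mod 5) \<and> c \<in> B ((j + 1) mod 5) \<and> b \<noteq> c
                 \<and> d \<in> B ((j + 2) mod 5) \<and> induces_P4 E {a, b, c, d}))"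

definition VH :: "(nat \<Rightarrow> 'a set) \<Rightarrow> 'a set" where
  "VH B = (\<Union>j<5. B j)"

definition supp :: "('a \<Rightarrow> 'a \<Rightarrow> bool) \<Rightarrow> (nat \<Rightarrow> 'a set) \<Rightarrow> 'a \<Rightarrow> nat set" where
  "supp E B v = {j. j < 5 \<and> (\<exists>u\<in>B j. E v u)}"

definition A2 :: "'a set \<Rightarrow> ('a \<Rightarrow> 'a \<Rightarrow> bool) \<Rightarrow> (nat \<Rightarrow> 'a set) \<Rightarrow> nat \<Rightarrow> 'a set" where
  "A2 V E B i = {v \<in> V. v \<notin> VH B \<and> supp E B v = {i, (i + 1) mod 5}}"

definition A3 :: "'a set \<Rightarrow> ('a \<Rightarrow> 'a \<Rightarrow> bool) \<Rightarrow> (nat \<Rightarrow> 'a set) \<Rightarrow> nat \<Rightarrow> 'a set" where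
  "A3 V E B j = {v \<in> V. v \<notin> VH B \<and> supp E B v = {(j + 4) mod 5, j, (j + 1) mod 5}}"

definition A3' :: "'a set \<Rightarrow> ('a \<Rightarrow> 'a \<Rightarrow> bool) \<Rightarrow> (nat \<Rightarrow> 'a set) \<Rightarrow> nat \<Rightarrow> 'a set" where
  "A3' V E B j = A3 V E B j \<union> B j"

definition nbhd :: "'a set \<Rightarrow> ('a \<Rightarrow> 'a \<Rightarrow> bool) \<Rightarrow> 'a set \<Rightarrow> 'a set" where
  "nbhd V E K = {v \<in> V. v \<notin> K \<and> (\<exists>u\<in>K. E v u)}"

definition connected_set :: "('a \<Rightarrow> 'a \<Rightarrow> bool) \<Rightarrow> 'a set \<Rightarrow> bool" where
  "connected_set E K \<longleftrightarrow> K \<noteq> {} \<and>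
     (\<forall>x\<in>K. \<forall>y\<in>K. (\<lambda>a b. a \<in> K \<and> b \<in> K \<and> E a b)\<^sup>*\<^sup>* x y)"

end

theory Submission
  imports Defs
begin
lemma all4: "(\<forall>p<(4::nat). P p) \<longleftrightarrow> P 0 \<and> P 1 \<and> P 2 \<and> P 3"
  by (simp add: numeral_eq_Suc All_less_Suc2)
lemma all6: "(\<forall>p<(6::nat). P p) \<longleftrightarrow> P 0 \<and> P 1 \<and> P 2 \<and> P 3 \<and> P 4 \<and> P 5"
  by (simp add: numeral_eq_Suc All_less_Suc2)
lemma all7: "(\<forall>p<(7::nat). P p) \<longleftrightarrow> P 0 \<and> P 1 \<and> P 2 \<and> P 3 \<and> P 4 \<and> P 5 \<and> P 6"
  by (simp add: numeral_eq_Suc All_less_Suc2)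
lemma P7I:
  assumes g: "graph V E"
  and V: "a0 \<in> V" "a1 \<in> V" "a2 \<in> V" "a3 \<in> V" "a4 \<in> V" "a5 \<in> V" "a6 \<in> V"
  and e: "E a0 a1" "E a1 a2" "E a2 a3" "E a3 a4" "E a4 a5" "E a5 a6"
  and n: "\<not>E a0 a2" "\<not>E a0 a3" "\<not>E a0 a4" "\<not>E a0 a5" "\<not>E a0 a6" "\<not>E a1 a3" "\<not>E a1 a4" "\<not>E a1 a5" "\<not>E a1 a6" "\<not>E a2 a4" "\<not>E a2 a5" "\<not>E a2 a6" "\<not>E a3 a5" "\<not>E a3 a6" "\<not>E a4 a6"
  shows "has_induced_P V E 7"
proof -
  have sym: "\<And>x y. E x y \<Longrightarrow> E y x" and irr: "\<And>x. \<not> E x x" using g unfolding graph_def by blast+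
  have e': "E a1 a0" "E a2 a1" "E a3 a2" "E a4 a3" "E a5 a4" "E a6 a5" using e sym by blast+
  have n': "\<not>E a2 a0" "\<not>E a3 a0" "\<not>E a4 a0" "\<not>E a5 a0" "\<not>E a6 a0" "\<not>E a3 a1" "\<not>E a4 a1" "\<not>E a5 a1" "\<not>E a6 a1" "\<not>E a4 a2" "\<not>E a5 a2" "\<not>E a6 a2" "\<not>E a5 a3" "\<not>E a6 a3" "\<not>E a6 a4" using n sym by blast+
  have "a0 \<noteq> a1" using \<open>E a0 a1\<close> irr by metis
  moreover have "a0 \<noteq> a2" using \<open>\<not>E a3 a0\<close> \<open>E a3 a2\<close> by metis
  moreover have "a0 \<noteq> a3" using \<open>E a1 a0\<close> \<open>\<not>E a1 a3\<close> by metis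
  moreover have "a0 \<noteq> a4" using \<open>E a1 a0\<close> \<open>\<not>E a1 a4\<close> by metis
  moreover have "a0 \<noteq> a5" using \<open>E a1 a0\<close> \<open>\<not>E a1 a5\<close> by metis
  moreover have "a0 \<noteq> a6" using \<open>E a1 a0\<close> \<open>\<not>E a1 a6\<close> by metis
  moreover have "a1 \<noteq> a2" using \<open>E a1 a2\<close> irr by metis
  moreover have "a1 \<noteq> a3" using \<open>E a0 a1\<close> \<open>\<not>E a0 a3\<close> by metis
  moreover have "a1 \<noteq> a4" using \<open>E a0 a1\<close> \<open>\<not>E a0 a4\<close> by metis
  moreover have "a1 \<noteq> a5" using \<open>E a0 a1\<close> \<open>\<not>E a0 a5\<close> by metis
  moreover have "a1 \<noteq> a6" using \<open>E a0 a1\<close> \<open>\<not>E a0 a6\<close> by metis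
  moreover have "a2 \<noteq> a3" using \<open>E a2 a3\<close> irr by metis
  moreover have "a2 \<noteq> a4" using \<open>E a1 a2\<close> \<open>\<not>E a1 a4\<close> by metis
  moreover have "a2 \<noteq> a5" using \<open>E a1 a2\<close> \<open>\<not>E a1 a5\<close> by metis
  moreover have "a2 \<noteq> a6" using \<open>E a1 a2\<close> \<open>\<not>E a1 a6\<close> by metis
  moreover have "a3 \<noteq> a4" using \<open>E a3 a4\<close> irr by metis
  moreover have "a3 \<noteq> a5" using \<open>E a2 a3\<close> \<open>\<not>E a2 a5\<close> by metis
  moreover have "a3 \<noteq> a6" using \<open>E a2 a3\<close> \<open>\<not>E a2 a6\<close> by metis
  moreover have "a4 \<noteq> a5" using \<open>E a4 a5\<close> irr by metis
  moreover have "a4 \<noteq> a6" using \<open>E a3 a4\<close> \<open>\<not>E a3 a6\<close> by metis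
  moreover have "a5 \<noteq> a6" using \<open>E a5 a6\<close> irr by metis
  ultimately have dd: "distinct [a0,a1,a2,a3,a4,a5,a6]" by auto
  show ?thesis unfolding has_induced_P_def induced_path_def
  proof (intro exI[of _ "(!) [a0,a1,a2,a3,a4,a5,a6]"] conjI)
    show "(!) [a0,a1,a2,a3,a4,a5,a6] ` {..<7} \<subseteq> V" using V by (auto simp: less_Suc_eq numeral_eq_Suc)
    show "inj_on ((!) [a0,a1,a2,a3,a4,a5,a6]) {..<7}" using dd by (simp add: inj_on_nth)
    show "\<forall>i<7. \<forall>j<7. E ([a0,a1,a2,a3,a4,a5,a6] ! i) ([a0,a1,a2,a3,a4,a5,a6] ! j) = (i + 1 = j \<or> j + 1 = i)" unfolding all7 by (simp add: e e' n n' irr)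
  qed
qed
lemma C4I:
  assumes g: "graph V E"
  and V: "a0 \<in> V" "a1 \<in> V" "a2 \<in> V" "a3 \<in> V"
  and e: "E a0 a1" "E a0 a3" "E a1 a2" "E a2 a3"
  and n: "\<not>E a0 a2" "\<not>E a1 a3"
  and d: "a0 \<noteq> a2" "a1 \<noteq> a3"
  shows "has_induced_C V E 4"
proof -
  have sym: "\<And>x y. E x y \<Longrightarrow> E y x" and irr: "\<And>x. \<not> E x x" using g unfolding graph_def by blast+
  have e': "E a1 a0" "E a3 a0" "E a2 a1" "E a3 a2" using e sym by blast+
  have n': "\<not>E a2 a0" "\<not>E a3 a1" using n sym by blast+
  have "a0 \<noteq> a1" using \<open>E a0 a1\<close> irr by metis
  moreover have "a0 \<noteq> a3" using \<open>E a0 a3\<close> irr by metis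
  moreover have "a1 \<noteq> a2" using \<open>E a1 a2\<close> irr by metis
  moreover have "a2 \<noteq> a3" using \<open>E a2 a3\<close> irr by metis
  ultimately have dd: "distinct [a0,a1,a2,a3]" using d by auto
  show ?thesis unfolding has_induced_C_def induced_cycle_def
  proof (intro exI[of _ "(!) [a0,a1,a2,a3]"] conjI)
    show "(!) [a0,a1,a2,a3] ` {..<4} \<subseteq> V" using V by (auto simp: less_Suc_eq numeral_eq_Suc)
    show "inj_on ((!) [a0,a1,a2,a3]) {..<4}" using dd by (simp add: inj_on_nth)
    show "\<forall>i<4. \<forall>j<4. E ([a0,a1,a2,a3] ! i) ([a0,a1,a2,a3] ! j) = (j = (i + 1) mod 4 \<or> i = (j + 1) mod 4)" unfolding all4 by (simp add: e e' n n' irr)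
  qed
qed
lemma C6I:
  assumes g: "graph V E"
  and V: "a0 \<in> V" "a1 \<in> V" "a2 \<in> V" "a3 \<in> V" "a4 \<in> V" "a5 \<in> V"
  and e: "E a0 a1" "E a0 a5" "E a1 a2" "E a2 a3" "E a3 a4" "E a4 a5"
  and n: "\<not>E a0 a2" "\<not>E a0 a3" "\<not>E a0 a4" "\<not>E a1 a3" "\<not>E a1 a4" "\<not>E a1 a5" "\<not>E a2 a4" "\<not>E a2 a5" "\<not>E a3 a5"
  shows "has_induced_C V E 6"
proof -
  have sym: "\<And>x y. E x y \<Longrightarrow> E y x" and irr: "\<And>x. \<not> E x x" using g unfolding graph_def by blast+
  have e': "E a1 a0" "E a5 a0" "E a2 a1" "E a3 a2" "E a4 a3" "E a5 a4" using e sym by blast+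
  have n': "\<not>E a2 a0" "\<not>E a3 a0" "\<not>E a4 a0" "\<not>E a3 a1" "\<not>E a4 a1" "\<not>E a5 a1" "\<not>E a4 a2" "\<not>E a5 a2" "\<not>E a5 a3" using n sym by blast+
  have "a0 \<noteq> a1" using \<open>E a0 a1\<close> irr by metis
  moreover have "a0 \<noteq> a2" using \<open>\<not>E a3 a0\<close> \<open>E a3 a2\<close> by metis
  moreover have "a0 \<noteq> a3" using \<open>E a1 a0\<close> \<open>\<not>E a1 a3\<close> by metis
  moreover have "a0 \<noteq> a4" using \<open>E a1 a0\<close> \<open>\<not>E a1 a4\<close> by metis
  moreover have "a0 \<noteq> a5" using \<open>E a0 a5\<close> irr by metis
  moreover have "a1 \<noteq> a2" using \<open>E a1 a2\<close> irr by metis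
  moreover have "a1 \<noteq> a3" using \<open>E a0 a1\<close> \<open>\<not>E a0 a3\<close> by metis
  moreover have "a1 \<noteq> a4" using \<open>E a0 a1\<close> \<open>\<not>E a0 a4\<close> by metis
  moreover have "a1 \<noteq> a5" using \<open>E a2 a1\<close> \<open>\<not>E a2 a5\<close> by metis
  moreover have "a2 \<noteq> a3" using \<open>E a2 a3\<close> irr by metis
  moreover have "a2 \<noteq> a4" using \<open>E a1 a2\<close> \<open>\<not>E a1 a4\<close> by metis
  moreover have "a2 \<noteq> a5" using \<open>\<not>E a0 a2\<close> \<open>E a0 a5\<close> by metis
  moreover have "a3 \<noteq> a4" using \<open>E a3 a4\<close> irr by metis
  moreover have "a3 \<noteq> a5" using \<open>\<not>E a0 a3\<close> \<open>E a0 a5\<close> by metis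
  moreover have "a4 \<noteq> a5" using \<open>E a4 a5\<close> irr by metis
  ultimately have dd: "distinct [a0,a1,a2,a3,a4,a5]" by auto
  show ?thesis unfolding has_induced_C_def induced_cycle_def
  proof (intro exI[of _ "(!) [a0,a1,a2,a3,a4,a5]"] conjI)
    show "(!) [a0,a1,a2,a3,a4,a5] ` {..<6} \<subseteq> V" using V by (auto simp: less_Suc_eq numeral_eq_Suc)
    show "inj_on ((!) [a0,a1,a2,a3,a4,a5]) {..<6}" using dd by (simp add: inj_on_nth)
    show "\<forall>i<6. \<forall>j<6. E ([a0,a1,a2,a3,a4,a5] ! i) ([a0,a1,a2,a3,a4,a5] ! j) = (j = (i + 1) mod 6 \<or> i = (j + 1) mod 6)" unfolding all6 by (simp add: e e' n n' irr)
  qed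
qed
lemma C7I:
  assumes g: "graph V E"
  and V: "a0 \<in> V" "a1 \<in> V" "a2 \<in> V" "a3 \<in> V" "a4 \<in> V" "a5 \<in> V" "a6 \<in> V"
  and e: "E a0 a1" "E a0 a6" "E a1 a2" "E a2 a3" "E a3 a4" "E a4 a5" "E a5 a6"
  and n: "\<not>E a0 a2" "\<not>E a0 a3" "\<not>E a0 a4" "\<not>E a0 a5" "\<not>E a1 a3" "\<not>E a1 a4" "\<not>E a1 a5" "\<not>E a1 a6" "\<not>E a2 a4" "\<not>E a2 a5" "\<not>E a2 a6" "\<not>E a3 a5" "\<not>E a3 a6" "\<not>E a4 a6"
  shows "has_induced_C V E 7"
proof -
  have sym: "\<And>x y. E x y \<Longrightarrow> E y x" and irr: "\<And>x. \<not> E x x" using g unfolding graph_def by blast+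
  have e': "E a1 a0" "E a6 a0" "E a2 a1" "E a3 a2" "E a4 a3" "E a5 a4" "E a6 a5" using e sym by blast+
  have n': "\<not>E a2 a0" "\<not>E a3 a0" "\<not>E a4 a0" "\<not>E a5 a0" "\<not>E a3 a1" "\<not>E a4 a1" "\<not>E a5 a1" "\<not>E a6 a1" "\<not>E a4 a2" "\<not>E a5 a2" "\<not>E a6 a2" "\<not>E a5 a3" "\<not>E a6 a3" "\<not>E a6 a4" using n sym by blast+
  have "a0 \<noteq> a1" using \<open>E a0 a1\<close> irr by metis
  moreover have "a0 \<noteq> a2" using \<open>\<not>E a3 a0\<close> \<open>E a3 a2\<close> by metis
  moreover have "a0 \<noteq> a3" using \<open>E a1 a0\<close> \<open>\<not>E a1 a3\<close> by metis
  moreover have "a0 \<noteq> a4" using \<open>E a1 a0\<close> \<open>\<not>E a1 a4\<close> by metis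
  moreover have "a0 \<noteq> a5" using \<open>E a1 a0\<close> \<open>\<not>E a1 a5\<close> by metis
  moreover have "a0 \<noteq> a6" using \<open>E a0 a6\<close> irr by metis
  moreover have "a1 \<noteq> a2" using \<open>E a1 a2\<close> irr by metis
  moreover have "a1 \<noteq> a3" using \<open>E a0 a1\<close> \<open>\<not>E a0 a3\<close> by metis
  moreover have "a1 \<noteq> a4" using \<open>E a0 a1\<close> \<open>\<not>E a0 a4\<close> by metis
  moreover have "a1 \<noteq> a5" using \<open>E a0 a1\<close> \<open>\<not>E a0 a5\<close> by metis
  moreover have "a1 \<noteq> a6" using \<open>E a2 a1\<close> \<open>\<not>E a2 a6\<close> by metis
  moreover have "a2 \<noteq> a3" using \<open>E a2 a3\<close> irr by metis
  moreover have "a2 \<noteq> a4" using \<open>E a1 a2\<close> \<open>\<not>E a1 a4\<close> by metis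
  moreover have "a2 \<noteq> a5" using \<open>E a1 a2\<close> \<open>\<not>E a1 a5\<close> by metis
  moreover have "a2 \<noteq> a6" using \<open>\<not>E a0 a2\<close> \<open>E a0 a6\<close> by metis
  moreover have "a3 \<noteq> a4" using \<open>E a3 a4\<close> irr by metis
  moreover have "a3 \<noteq> a5" using \<open>E a2 a3\<close> \<open>\<not>E a2 a5\<close> by metis
  moreover have "a3 \<noteq> a6" using \<open>\<not>E a0 a3\<close> \<open>E a0 a6\<close> by metis
  moreover have "a4 \<noteq> a5" using \<open>E a4 a5\<close> irr by metis
  moreover have "a4 \<noteq> a6" using \<open>\<not>E a0 a4\<close> \<open>E a0 a6\<close> by metis
  moreover have "a5 \<noteq> a6" using \<open>E a5 a6\<close> irr by metis
  ultimately have dd: "distinct [a0,a1,a2,a3,a4,a5,a6]" by auto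
  show ?thesis unfolding has_induced_C_def induced_cycle_def
  proof (intro exI[of _ "(!) [a0,a1,a2,a3,a4,a5,a6]"] conjI)
    show "(!) [a0,a1,a2,a3,a4,a5,a6] ` {..<7} \<subseteq> V" using V by (auto simp: less_Suc_eq numeral_eq_Suc)
    show "inj_on ((!) [a0,a1,a2,a3,a4,a5,a6]) {..<7}" using dd by (simp add: inj_on_nth)
    show "\<forall>i<7. \<forall>j<7. E ([a0,a1,a2,a3,a4,a5,a6] ! i) ([a0,a1,a2,a3,a4,a5,a6] ! j) = (j = (i + 1) mod 7 \<or> i = (j + 1) mod 7)" unfolding all7 by (simp add: e e' n n' irr)
  qed
qed

definition walkK :: "('a \<Rightarrow> 'a \<Rightarrow> bool) \<Rightarrow> 'a set \<Rightarrow> 'a \<Rightarrow> 'a \<Rightarrow> (nat \<Rightarrow> 'a) \<Rightarrow> nat \<Rightarrow> bool" where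
  "walkK E K u v f n \<longleftrightarrow> n \<ge> 1 \<and> (\<forall>j<n. f j \<in> K) \<and> (\<forall>j. Suc j < n \<longrightarrow> E (f j) (f (Suc j)))
     \<and> E u (f 0) \<and> E v (f (n - 1))"

lemma walk_from_rtranclp:
  assumes "(\<lambda>a b. a \<in> K \<and> b \<in> K \<and> E a b)\<^sup>*\<^sup>* x y" "x \<in> K"
  shows "\<exists>f n. n \<ge> 1 \<and> f 0 = x \<and> f (n - 1) = y \<and> (\<forall>j<n. f j \<in> K) \<and> (\<forall>j. Suc j < n \<longrightarrow> E (f j) (f (Suc j)))"
  using assms(1)
proof (induction rule: rtranclp_induct)
  case base
  show ?case by (rule exI[of _ "\<lambda>_. x"], rule exI[of _ 1]) (simp add: assms(2))
next
  case (step y z)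
  then obtain f n where f: "n \<ge> 1" "f 0 = x" "f (n - 1) = y" "\<forall>j<n. f j \<in> K" "\<forall>j. Suc j < n \<longrightarrow> E (f j) (f (Suc j))"
    by blast
  show ?case
  proof (rule exI[of _ "f(n := z)"], rule exI[of _ "Suc n"], intro conjI allI impI)
    show "(f(n := z)) 0 = x" using f by auto
    show "(f(n := z)) (Suc n - 1) = z" by simp
    show "\<And>j. j < Suc n \<Longrightarrow> (f(n := z)) j \<in> K" using f step by (auto simp: less_Suc_eq)
    fix j assume "Suc j < Suc n"
    then show "E ((f(n := z)) j) ((f(n := z)) (Suc j))" using f step
      by (cases "Suc j = n") auto
  qed simp
qed

lemma shortest_walk:
  assumes sym: "\<And>x y. E x y \<Longrightarrow> E y x" and irr: "\<And>x. \<not> E x x"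
    and uK: "u \<notin> K" and vK: "v \<notin> K" and uv: "u \<noteq> v" "\<not> E u v"
    and ex: "\<exists>f n. walkK E K u v f n"
  shows "\<exists>f n. walkK E K u v f n \<and>
     induced_path E (\<lambda>j. if j = 0 then u else if j \<le> n then f (j - 1) else v) (n + 2)"
proof -
  from ex obtain n where exn: "\<exists>f. walkK E K u v f n" and min: "\<And>m. m < n \<Longrightarrow> \<not> (\<exists>f. walkK E K u v f m)"
    using exists_least_iff[of "\<lambda>n. \<exists>f. walkK E K u v f n"] by blast
  from exn obtain f where w: "walkK E K u v f n" by blast
  have n1: "n \<ge> 1" and fK: "\<And>j. j < n \<Longrightarrow> f j \<in> K"
    and ch: "\<And>j. Suc j < n \<Longrightarrow> E (f j) (f (Suc j))" and u0: "E u (f 0)" and vl: "E v (f (n - 1))"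
    using w unfolding walkK_def by auto
  have c1: "\<not> E u (f j)" if "1 \<le> j" "j < n" for j
  proof
    assume a: "E u (f j)"
    have "walkK E K u v (\<lambda>k. f (k + j)) (n - j)"
      unfolding walkK_def using that a fK ch vl by (auto simp: Suc_diff_Suc)
    then show False using min[of "n - j"] that by auto
  qed
  have c2: "\<not> E v (f j)" if "Suc j < n" for j
  proof
    assume a: "E v (f j)"
    have "walkK E K u v f (Suc j)"
      unfolding walkK_def using that a fK ch u0 by auto
    then show False using min[of "Suc j"] that by auto
  qed
  have c3: "\<not> E (f p) (f q)" if "Suc p < q" "q < n" for p q
  proof
    assume a: "E (f p) (f q)"
    define f' where "f' = (\<lambda>k. if k \<le> p then f k else f (k + (q - p - 1)))"
    have "walkK E K u v f' (n - (q - p - 1))"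
      unfolding walkK_def
    proof (intro conjI allI impI)
      show "1 \<le> n - (q - p - 1)" using that by auto
      show "f' j \<in> K" if "j < n - (q - p - 1)" for j using that \<open>q < n\<close> fK unfolding f'_def by auto
      show "E (f' j) (f' (Suc j))" if "Suc j < n - (q - p - 1)" for j
      proof -
        consider "Suc j \<le> p" | "j = p" | "j > p" by linarith
        then show ?thesis
        proof cases
          case 1 then show ?thesis using ch \<open>q < n\<close> \<open>Suc p < q\<close> unfolding f'_def by auto
        next
          case 2 then show ?thesis using a \<open>Suc p < q\<close> unfolding f'_def by auto
        next
          case 3 then have "E (f (j + (q - p - 1))) (f (Suc (j + (q - p - 1))))"
            using ch that \<open>Suc p < q\<close> by auto
          then show ?thesis using 3 unfolding f'_def by (simp add: add.commute)
        qed
      qed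
      show "E u (f' 0)" using u0 unfolding f'_def by auto
      have "\<not> (n - (q - p - 1) - 1 \<le> p)" "n - (q - p - 1) - 1 + (q - p - 1) = n - 1" using that by arith+
      then show "E v (f' (n - (q - p - 1) - 1))" using vl unfolding f'_def by simp
    qed
    then show False using min[of "n - (q - p - 1)"] that by auto
  qed
  have c4: "f p \<noteq> f q" if "p < q" "q < n" for p q
  proof
    assume a: "f p = f q"
    define f' where "f' = (\<lambda>k. if k < p then f k else f (k + (q - p)))"
    have "walkK E K u v f' (n - (q - p))"
      unfolding walkK_def
    proof (intro conjI allI impI)
      show "1 \<le> n - (q - p)" using that by auto
      show "f' j \<in> K" if "j < n - (q - p)" for j using that \<open>q < n\<close> fK unfolding f'_def by auto
      show "E (f' j) (f' (Suc j))" if "Suc j < n - (q - p)" for j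
      proof -
        consider "Suc j < p" | "Suc j = p" | "j \<ge> p" by linarith
        then show ?thesis
        proof cases
          case 1 then show ?thesis using ch \<open>q < n\<close> \<open>p < q\<close> unfolding f'_def by auto
        next
          case 2
          have "E (f j) (f (Suc j))" using ch[of j] 2 \<open>p < q\<close> \<open>q < n\<close> by auto
          then show ?thesis using a 2 \<open>p < q\<close> unfolding f'_def by auto
        next
          case 3 then have "E (f (j + (q - p))) (f (Suc (j + (q - p))))"
            using ch that \<open>p < q\<close> by auto
          then show ?thesis using 3 unfolding f'_def by (simp add: add.commute)
        qed
      qed
      show "E u (f' 0)" using u0 a unfolding f'_def by auto
      show "E v (f' (n - (q - p) - 1))" using vl that unfolding f'_def by auto
    qed
    then show False using min[of "n - (q - p)"] that by auto
  qed
  define g where "g = (\<lambda>j. if j = 0 then u else if j \<le> n then f (j - 1) else v)"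
  have ff: "E (f a) (f b) \<longleftrightarrow> (a + 1 = b \<or> b + 1 = a)" if "a < n" "b < n" for a b
  proof (cases "a + 1 = b \<or> b + 1 = a")
    case True then show ?thesis using ch sym that by auto
  next
    case False
    then consider "a = b" | "Suc a < b" | "Suc b < a" by linarith
    then show ?thesis using irr c3 sym that False by metis
  qed
  have uf: "E u (f a) \<longleftrightarrow> a = 0" if "a < n" for a using c1 u0 that by (cases a) auto
  have vf: "E v (f a) \<longleftrightarrow> a = n - 1" if "a < n" for a using c2 vl that n1
    by (metis Suc_lessI diff_Suc_1 less_diff_conv)
  have "induced_path E g (n + 2)"
    unfolding induced_path_def
  proof (intro conjI allI impI)
    show "inj_on g {..<n + 2}"
    proof (rule inj_onI)
      have fi: "a = b" if "a < n" "b < n" "f a = f b" for a b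
        using c4[of a b] c4[of b a] that by (cases a b rule: linorder_cases) auto
      fix a b assume ab: "a \<in> {..<n + 2}" "b \<in> {..<n + 2}" and gab: "g a = g b"
      consider "a = 0" | "1 \<le> a \<and> a \<le> n" | "a = n + 1" using ab by force
      then show "a = b"
      proof cases
        case 1 then show ?thesis using gab uK uv fK[of "b - 1"] ab by (auto simp: g_def split: if_splits)
      next
        case 2
        have am: "a - 1 < n" using 2 by arith
        consider "b = 0" | "1 \<le> b \<and> b \<le> n" | "b = n + 1" using ab by force
        then show ?thesis
        proof cases
          case 1 then show ?thesis using \<open>1 \<le> a \<and> a \<le> n\<close> gab uK fK[of "a - 1"] am by (auto simp: g_def)
        next
          case 2 then show ?thesis using \<open>1 \<le> a \<and> a \<le> n\<close> gab fi[of "a - 1" "b - 1"] am by (auto simp: g_def)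
        next
          case 3 then show ?thesis using \<open>1 \<le> a \<and> a \<le> n\<close> gab vK fK[of "a - 1"] am by (auto simp: g_def)
        qed
      next
        case 3 then show ?thesis using gab vK uv fK[of "b - 1"] ab by (auto simp: g_def split: if_splits)
      qed
    qed
    have g0: "g 0 = u" and gm: "\<And>a. 1 \<le> a \<Longrightarrow> a \<le> n \<Longrightarrow> g a = f (a - 1)" and gl: "g (n + 1) = v"
      unfolding g_def by auto
    have lt: "b - 1 < n" if "1 \<le> b" "b \<le> n" for b using that by arith
    have vu: "\<not> E v u" using uv sym by blast
    have mm: "E (g a) (g b) = (a + 1 = b \<or> b + 1 = a)" if "1 \<le> a" "a \<le> n" "1 \<le> b" "b \<le> n" for a b
      using ff[of "a - 1" "b - 1"] gm[of a] gm[of b] that lt[OF that(1,2)] lt[OF that(3,4)] by auto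
    have um: "E (g 0) (g b) = (0 + 1 = b \<or> b + 1 = 0)" "E (g b) (g 0) = (b + 1 = 0 \<or> 0 + 1 = b)"
      if "1 \<le> b" "b \<le> n" for b
      using uf[of "b - 1"] gm[of b] that g0 sym lt[OF that(1,2)] by auto
    have vm: "E (g (n + 1)) (g b) = (n + 1 + 1 = b \<or> b + 1 = n + 1)" "E (g b) (g (n + 1)) = (b + 1 = n + 1 \<or> n + 1 + 1 = b)"
      if "1 \<le> b" "b \<le> n" for b
      using vf[of "b - 1"] gm[of b] that gl sym lt[OF that(1,2)] by auto
    have ul: "E (g 0) (g (n + 1)) = (0 + 1 = n + 1 \<or> n + 1 + 1 = 0)" "E (g (n + 1)) (g 0) = (n + 1 + 1 = 0 \<or> 0 + 1 = n + 1)"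
      using g0 gl uv vu n1 by auto
    have dd: "E (g a) (g a) = (a + 1 = a \<or> a + 1 = a)" for a using irr by simp
    fix a b assume ab: "a < n + 2" "b < n + 2"
    consider "a = 0" | "1 \<le> a" "a \<le> n" | "a = n + 1" using ab by linarith
    then show "E (g a) (g b) = (a + 1 = b \<or> b + 1 = a)"
    proof cases
      case 1
      consider "b = 0" | "1 \<le> b" "b \<le> n" | "b = n + 1" using ab by linarith
      then show ?thesis
      proof cases
        case 1 then show ?thesis using \<open>a = 0\<close> dd[of 0] by simp
      next
        case 2 then show ?thesis using \<open>a = 0\<close> um(1)[of b] by simp
      next
        case 3 then show ?thesis using \<open>a = 0\<close> ul(1) by simp
      qed
    next
      case 2
      consider "b = 0" | "1 \<le> b" "b \<le> n" | "b = n + 1" using ab by linarith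
      then show ?thesis
      proof cases
        case 1 then show ?thesis using 2 um(2)[of a] by simp
      next
        case 3 then show ?thesis using 2 vm(2)[of a] by simp
      next
        case 2 then show ?thesis using \<open>1 \<le> a\<close> \<open>a \<le> n\<close> mm[of a b] by simp
      qed
    next
      case 3
      consider "b = 0" | "1 \<le> b" "b \<le> n" | "b = n + 1" using ab by linarith
      then show ?thesis
      proof cases
        case 1 then show ?thesis using \<open>a = n + 1\<close> ul(2) by simp
      next
        case 2 then show ?thesis using \<open>a = n + 1\<close> vm(1)[of b] by simp
      next
        case 3 then show ?thesis using \<open>a = n + 1\<close> dd[of "n + 1"] by simp
      qed
    qed
  qed
  then show ?thesis using w unfolding g_def by blast
qed

lemma P7_from_long:
  assumes "induced_path E g N" "N \<ge> 7" "g ` {..<N} \<subseteq> V"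
  shows "has_induced_P V E 7"
  unfolding has_induced_P_def
proof (intro exI conjI)
  show "g ` {..<7} \<subseteq> V" using assms(2,3) by auto
  show "induced_path E g 7" using assms(1,2) unfolding induced_path_def
    by (auto intro: inj_on_subset)
qed

theorem lemma7p2:
  fixes V :: "'a set" and E :: "'a \<Rightarrow> 'a \<Rightarrow> bool" and B :: "nat \<Rightarrow> 'a set"
    and i :: nat and K :: "'a set" and u v :: 'a
  assumes "graph V E"
    and "\<not> has_induced_P V E 7" and "\<not> has_induced_C V E 4"
    and "\<not> has_induced_C V E 6" and "\<not> has_induced_C V E 7"
    and "nice_blowup_C5 V E B"
    and "i < 5"
    and "K \<subseteq> A2 V E B i" and "connected_set E K"
    and "u \<in> nbhd V E K \<inter> A3' V E B ((i + 1) mod 5)"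
    and "v \<in> nbhd V E K \<inter> A3' V E B ((i + 1) mod 5)"
    and "u \<noteq> v" and "\<not> E u v"
  shows "\<exists>w\<in>K. E u w \<and> E v w"
proof (rule ccontr)
  assume nc0: "\<not> (\<exists>w\<in>K. E u w \<and> E v w)"
  note g = assms(1) and noP7 = assms(2) and noC4 = assms(3) and noC6 = assms(4) and noC7 = assms(5)
  note i5 = assms(7) and uv = assms(12) and nuv = assms(13)
  have sym: "\<And>x y. E x y \<Longrightarrow> E y x" and irr: "\<And>x. \<not> E x x"
    and EV: "\<And>x y. E x y \<Longrightarrow> x \<in> V"
    using g unfolding graph_def by blast+
  have BV: "\<And>j. j < 5 \<Longrightarrow> B j \<subseteq> V"
    and dis: "\<And>j k. j < 5 \<Longrightarrow> k < 5 \<Longrightarrow> j \<noteq> k \<Longrightarrow> B j \<inter> B k = {}"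
    and cl: "\<And>j x y. j < 5 \<Longrightarrow> x \<in> B j \<Longrightarrow> y \<in> B j \<Longrightarrow> x \<noteq> y \<Longrightarrow> E x y"
    and nbl: "\<And>j x. j < 5 \<Longrightarrow> x \<in> B j \<Longrightarrow> \<exists>y\<in>B ((j + 4) mod 5). E x y"
    and nbr: "\<And>j x. j < 5 \<Longrightarrow> x \<in> B j \<Longrightarrow> \<exists>y\<in>B ((j + 1) mod 5). E x y"
    and ac: "\<And>j x y. j < 5 \<Longrightarrow> x \<in> B j \<Longrightarrow> y \<in> B ((j + 2) mod 5) \<Longrightarrow> \<not> E x y"
    using assms(6) unfolding nice_blowup_C5_def is_clique_def anticomplete_def by (meson, meson, meson, meson, meson, meson)
  define b1 where "b1 = (i + 1) mod 5"
  define b2 where "b2 = (i + 2) mod 5"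
  define b3 where "b3 = (i + 3) mod 5"
  define b4 where "b4 = (i + 4) mod 5"
  have i5cases: "i = 0 \<or> i = 1 \<or> i = 2 \<or> i = 3 \<or> i = 4" using i5 by arith
  have lt: "b1 < 5" "b2 < 5" "b3 < 5" "b4 < 5" unfolding b1_def b2_def b3_def b4_def by auto
  have ix: "(b1 + 4) mod 5 = i" "(b1 + 1) mod 5 = b2" "(b2 + 1) mod 5 = b3" "(b3 + 1) mod 5 = b4"
    "(b4 + 1) mod 5 = i" "(i + 2) mod 5 = b2" "(b1 + 2) mod 5 = b3" "(b2 + 2) mod 5 = b4"
    "(b3 + 2) mod 5 = i" "(b4 + 2) mod 5 = b1"
    "i \<noteq> b1" "i \<noteq> b2" "i \<noteq> b3" "i \<noteq> b4" "b1 \<noteq> b2" "b1 \<noteq> b3" "b1 \<noteq> b4"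
    "b2 \<noteq> b3" "b2 \<noteq> b4" "b3 \<noteq> b4"
    using i5cases unfolding b1_def b2_def b3_def b4_def by (elim disjE; simp)+

  have i2: "(i + 2) mod 5 = b2" by (rule ix(6))
  have Kfacts: "k \<in> V \<and> supp E B k = {i, b1}" if "k \<in> K" for k
    using that assms(8) unfolding A2_def b1_def by auto
  have nK: "\<not> E k y \<and> \<not> E y k" if "k \<in> K" "y \<in> B b2 \<union> B b3 \<union> B b4" for k y
  proof -
    have "\<not> E k y"
    proof
      assume "E k y"
      then have "b2 \<in> supp E B k \<or> b3 \<in> supp E B k \<or> b4 \<in> supp E B k"
        using that(2) lt unfolding supp_def by auto
      then show False using Kfacts[OF that(1)] ix(12-17) by auto
    qed
    then show ?thesis using sym by blast
  qed
  have nK2: "\<not> E k y" "\<not> E y k" if "k \<in> K" "y \<in> B b2" for k y using nK that by blast+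
  have nK3: "\<not> E k y" "\<not> E y k" if "k \<in> K" "y \<in> B b3" for k y using nK that by blast+
  have nK4: "\<not> E k y" "\<not> E y k" if "k \<in> K" "y \<in> B b4" for k y using nK that by blast+
  have KV: "k \<in> V" if "k \<in> K" for k using Kfacts that by blast
  have wfacts: "w \<in> V \<and> w \<notin> K \<and> (\<exists>k\<in>K. E w k) \<and> (\<forall>y \<in> B b3 \<union> B b4. \<not> E w y \<and> \<not> E y w) \<and> (\<exists>y\<in>B b2. E w y)"
    if "w \<in> nbhd V E K \<inter> A3' V E B ((i + 1) mod 5)" for w
  proof -
    have w1: "w \<in> V" "w \<notin> K" "\<exists>k\<in>K. E w k" using that unfolding nbhd_def by auto
    have "w \<in> A3 V E B b1 \<or> w \<in> B b1" using that unfolding A3'_def b1_def by auto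
    then have "(\<forall>y \<in> B b3 \<union> B b4. \<not> E w y) \<and> (\<exists>y\<in>B b2. E w y)"
    proof
      assume "w \<in> A3 V E B b1"
      then have s: "supp E B w = {i, b1, b2}" using ix(1,2) unfolding A3_def by simp
      have "\<forall>y \<in> B b3 \<union> B b4. \<not> E w y"
      proof (intro ballI notI)
        fix y assume "y \<in> B b3 \<union> B b4" "E w y"
        then have "b3 \<in> supp E B w \<or> b4 \<in> supp E B w" using lt unfolding supp_def by auto
        then show False using s ix(13,14,16-19) by auto
      qed
      moreover have "b2 \<in> supp E B w" using s by auto
      then have "\<exists>y\<in>B b2. E w y" unfolding supp_def by auto
      ultimately show ?thesis by blast
    next
      assume wb: "w \<in> B b1"
      have "\<forall>y \<in> B b3 \<union> B b4. \<not> E w y"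
      proof (intro ballI notI)
        fix y assume y: "y \<in> B b3 \<union> B b4" "E w y"
        show False
        proof (cases "y \<in> B b3")
          case True then show False using ac[OF lt(1) wb, of y] ix(7) y(2) by simp
        next
          case False then have "y \<in> B b4" using y by auto
          then show False using ac[OF lt(4) \<open>y \<in> B b4\<close>, of w] ix(10) wb y(2) sym by auto
        qed
      qed
      moreover have "\<exists>y\<in>B b2. E w y" using nbr[OF lt(1) wb] ix(2) by simp
      ultimately show ?thesis by blast
    qed
    then show ?thesis using w1 sym by blast
  qed
  have u: "u \<in> V" "u \<notin> K" "\<exists>k\<in>K. E u k" "\<exists>y\<in>B b2. E u y"
    and nu: "\<And>y. y \<in> B b3 \<union> B b4 \<Longrightarrow> \<not> E u y \<and> \<not> E y u"
    using wfacts[OF assms(10)] by blast+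
  have v: "v \<in> V" "v \<notin> K" "\<exists>k\<in>K. E v k" "\<exists>y\<in>B b2. E v y"
    and nv: "\<And>y. y \<in> B b3 \<union> B b4 \<Longrightarrow> \<not> E v y \<and> \<not> E y v"
    using wfacts[OF assms(11)] by blast+
  have nu3: "\<not> E u y" "\<not> E y u" "\<not> E v y" "\<not> E y v" if "y \<in> B b3" for y using nu nv that by blast+
  have nu4: "\<not> E u y" "\<not> E y u" "\<not> E v y" "\<not> E y v" if "y \<in> B b4" for y using nu nv that by blast+
  have ac02: "\<not> E x y" "\<not> E y x" if "x \<in> B i" "y \<in> B b2" for x y
    using ac[OF i5 that(1)] ix(6) sym that by auto
  have ac24: "\<not> E x y" "\<not> E y x" if "x \<in> B b2" "y \<in> B b4" for x y
    using ac[OF lt(2) that(1)] ix(8) sym that by auto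
  have ac30: "\<not> E x y" "\<not> E y x" if "x \<in> B b3" "y \<in> B i" for x y
    using ac[OF lt(3) that(1)] ix(9) sym that by auto
  have BV': "x \<in> V" if "x \<in> B j" "j < 5" for x j using BV that by blast
  obtain k where k: "k \<in> K" "E u k" using u by blast
  obtain k' where k': "k' \<in> K" "E v k'" using v by blast
  have "(\<lambda>a b. a \<in> K \<and> b \<in> K \<and> E a b)\<^sup>*\<^sup>* k k'" using assms(9) k k' unfolding connected_set_def by blast
  from walk_from_rtranclp[OF this k(1)] obtain f0 n0 where
    "n0 \<ge> 1" "f0 0 = k" "f0 (n0 - 1) = k'" "\<forall>j<n0. f0 j \<in> K" "\<forall>j. Suc j < n0 \<longrightarrow> E (f0 j) (f0 (Suc j))"
    by blast
  then have "walkK E K u v f0 n0" using k k' unfolding walkK_def by auto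
  from shortest_walk[OF sym irr u(2) v(2) uv nuv] this obtain f n where
    w: "walkK E K u v f n" and ip: "induced_path E (\<lambda>j. if j = 0 then u else if j \<le> n then f (j - 1) else v) (n + 2)"
    by blast
  define gg where "gg = (\<lambda>j. if j = 0 then u else if j \<le> n then f (j - 1) else v)"
  have n1: "n \<ge> 1" and fK: "\<And>j. j < n \<Longrightarrow> f j \<in> K" and u0: "E u (f 0)" and vl: "E v (f (n - 1))"
    using w unfolding walkK_def by auto
  have P: "E (gg a) (gg b) \<longleftrightarrow> (a + 1 = b \<or> b + 1 = a)" if "a < n + 2" "b < n + 2" for a b
    using ip that unfolding induced_path_def gg_def by blast
  have n2: "n \<ge> 2"
  proof (rule ccontr)
    assume "\<not> n \<ge> 2" then have "n = 1" using n1 by auto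
    then show False using nc0 fK[of 0] u0 vl by auto
  qed
  have ggV: "gg ` {..<n + 2} \<subseteq> V" unfolding gg_def using u v fK KV by auto
  have n4: "n \<le> 4"
  proof (rule ccontr)
    assume "\<not> n \<le> 4"
    then show False using P7_from_long[OF ip[folded gg_def] _ ggV] noP7 by auto
  qed

  define k0 where "k0 = f 0"
  define k1 where "k1 = f 1"
  define k2 where "k2 = f 2"
  define k3 where "k3 = f 3"
  note kdefs = k0_def k1_def k2_def k3_def
  obtain a where a: "a \<in> B b2" "E u a" using u by blast
  obtain bb where bb: "bb \<in> B b2" "E v bb" using v by blast
  have aV: "a \<in> V" "bb \<in> V" using a bb BV' lt by auto
  note memb = u(1) v(1) aV
  note nonE = nK2 nK3 nK4 nu3 nu4 ac02 ac24 ac30 nuv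
  have nvu: "\<not> E v u" using nuv sym by blast
  have Ecomm: "E x y = E y x" for x y using sym by blast
  have sa: "E a u" "E bb v" using a bb sym by auto
  consider "n = 2" | "n = 3" | "n = 4" using n2 n4 by linarith
  note ncases = this
  show False
  proof (cases "\<exists>c\<in>B b2. E u c \<and> E v c")
    case True
    then obtain c where c: "c \<in> B b2" "E u c" "E v c" by blast
    have cV: "c \<in> V" using c BV' lt by auto
    have sc: "E c u" "E c v" using c sym by auto
    from ncases show False
    proof cases
      case 1
      have kK: "k0 \<in> K" "k1 \<in> K" using fK 1 unfolding kdefs by auto
      have kV: "k0 \<in> V" "k1 \<in> V" using kK KV by auto
      have pe: "E u k0" "E k0 k1" "E k1 v" "\<not> E u k1" "\<not> E k0 v"
        using P[of 0 1] P[of 1 2] P[of 2 3] P[of 0 2] P[of 1 3] by (simp_all add: gg_def kdefs 1)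
      have pe': "E k0 u" "E k1 k0" "E v k1" "\<not> E k1 u" "\<not> E v k0"
        using pe sym by blast+
      obtain d where d: "d \<in> B b3" "E c d" using nbr[OF lt(2) c(1)] ix(3) by auto
      obtain e where e: "e \<in> B b4" "E d e" using nbr[OF lt(3) d(1)] ix(4) by auto
      obtain x where x: "x \<in> B i" "E e x" using nbr[OF lt(4) e(1)] ix(5) by auto
      have dV: "d \<in> V" "e \<in> V" "x \<in> V" using d e x BV' lt i5 by auto
      have sd: "E d c" "E e d" "E x e" using d e x sym by auto
      have xc: "x \<noteq> c" using x c dis[OF i5 lt(2) ix(12)] by auto
      note F = memb cV kV dV kK a bb c d e x sa sc pe pe' sd nvu
      show False
      proof (cases "E x k0 \<and> \<not> E x u")
        case True
        have "has_induced_C V E 6"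
          by (rule C6I[OF g, of x e d c u k0])
             (simp_all add: nonE Ecomm True[simplified Ecomm] F[simplified Ecomm])
        then show False using noC6 by blast
      next
        case nx1: False
        show False
        proof (cases "E x k1 \<and> \<not> E x v")
          case True
          have "has_induced_C V E 6"
            by (rule C6I[OF g, of x e d c v k1])
               (simp_all add: nonE Ecomm True[simplified Ecomm] F[simplified Ecomm])
          then show False using noC6 by blast
        next
          case nx2: False
          show False
          proof (cases "E x u \<and> E x v")
            case True
            have "has_induced_C V E 4"
              by (rule C4I[OF g, of x u c v])
                 (simp_all add: nonE Ecomm True[simplified Ecomm] F[simplified Ecomm] xc[simplified Ecomm] uv[simplified Ecomm])
            then show False using noC4 by blast
          next
            case nx3: False
            show False
            proof (cases "E x u")
              case True
              then have nxv: "\<not> E x v" "\<not> E x k1" using nx3 nx2 by auto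
              show False
              proof (cases "E x k0")
                case True
                have "has_induced_C V E 7"
                  by (rule C7I[OF g, of x e d c v k1 k0])
                     (simp_all add: nonE Ecomm True[simplified Ecomm] nxv[simplified Ecomm] F[simplified Ecomm])
                then show False using noC7 by blast
              next
                case False
                have "has_induced_P V E 7"
                  by (rule P7I[OF g, of x e d c v k1 k0])
                     (simp_all add: nonE Ecomm False[simplified Ecomm] nxv[simplified Ecomm] F[simplified Ecomm])
                then show False using noP7 by blast
              qed
            next
              case nxu: False
              then have nxu': "\<not> E x k0" using nx1 by auto
              show False
              proof (cases "E x v")
                case True
                show False
                proof (cases "E x k1")
                  case True
                  have "has_induced_C V E 7"
                    by (rule C7I[OF g, of x e d c u k0 k1])
                       (simp_all add: nonE Ecomm True[simplified Ecomm] nxu[simplified Ecomm] nxu'[simplified Ecomm] F[simplified Ecomm])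
                  then show False using noC7 by blast
                next
                  case False
                  have "has_induced_P V E 7"
                    by (rule P7I[OF g, of x e d c u k0 k1])
                       (simp_all add: nonE Ecomm False[simplified Ecomm] nxu[simplified Ecomm] nxu'[simplified Ecomm] F[simplified Ecomm])
                  then show False using noP7 by blast
                qed
              next
                case False
                then have nk1: "\<not> E x k1" using nx2 by auto
                have "has_induced_P V E 7"
                  by (rule P7I[OF g, of x e d c u k0 k1])
                     (simp_all add: nonE Ecomm nk1[simplified Ecomm] nxu[simplified Ecomm] nxu'[simplified Ecomm] F[simplified Ecomm])
                then show False using noP7 by blast
              qed
            qed
          qed
        qed
      qed
    next
      case 2
      have kK: "k0 \<in> K" "k1 \<in> K" "k2 \<in> K" using fK 2 unfolding kdefs by auto
      have kV: "k0 \<in> V" "k1 \<in> V" "k2 \<in> V" using kK KV by auto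
      have pe: "E u k0" "E k0 k1" "E k1 k2" "E k2 v"
        "\<not> E u k1" "\<not> E u k2" "\<not> E k0 k2" "\<not> E k0 v" "\<not> E k1 v"
        using P[of 0 1] P[of 1 2] P[of 2 3] P[of 3 4] P[of 0 2] P[of 0 3] P[of 1 3] P[of 1 4] P[of 2 4]
        by (simp_all add: gg_def kdefs 2)
      have "has_induced_C V E 6"
        by (rule C6I[OF g, of u k0 k1 k2 v c])
           (simp_all add: nonE Ecomm memb[simplified Ecomm] cV[simplified Ecomm] kV[simplified Ecomm] kK[simplified Ecomm] c[simplified Ecomm] pe[simplified Ecomm] sc[simplified Ecomm] nuv[simplified Ecomm])
      then show False using noC6 by blast
    next
      case 3
      have kK: "k0 \<in> K" "k1 \<in> K" "k2 \<in> K" "k3 \<in> K" using fK 3 unfolding kdefs by auto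
      have kV: "k0 \<in> V" "k1 \<in> V" "k2 \<in> V" "k3 \<in> V" using kK KV by auto
      have pe: "E u k0" "E k0 k1" "E k1 k2" "E k2 k3" "E k3 v"
        "\<not> E u k1" "\<not> E u k2" "\<not> E u k3" "\<not> E k0 k2" "\<not> E k0 k3" "\<not> E k0 v"
        "\<not> E k1 k3" "\<not> E k1 v" "\<not> E k2 v"
        using P[of 0 1] P[of 1 2] P[of 2 3] P[of 3 4] P[of 4 5] P[of 0 2] P[of 0 3] P[of 0 4]
          P[of 1 3] P[of 1 4] P[of 1 5] P[of 2 4] P[of 2 5] P[of 3 5]
        by (simp_all add: gg_def kdefs 3)
      have "has_induced_C V E 7"
        by (rule C7I[OF g, of u k0 k1 k2 k3 v c])
           (simp_all add: nonE Ecomm memb[simplified Ecomm] cV[simplified Ecomm] kV[simplified Ecomm] kK[simplified Ecomm] c[simplified Ecomm] pe[simplified Ecomm] sc[simplified Ecomm] nuv[simplified Ecomm])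
      then show False using noC7 by blast
    qed
  next
    case False
    have nav: "\<not> E v a" "\<not> E a v" "\<not> E u bb" "\<not> E bb u" using False a bb sym by blast+
    have abne: "a \<noteq> bb" using a(2) nav(3) by blast
    have ab: "E a bb" "E bb a" using cl[OF lt(2) a(1) bb(1) abne] sym by blast+
    from ncases show False
    proof cases
      case 1
      have kK: "k0 \<in> K" "k1 \<in> K" using fK 1 unfolding kdefs by auto
      have kV: "k0 \<in> V" "k1 \<in> V" using kK KV by auto
      have pe: "E u k0" "E k0 k1" "E k1 v" "\<not> E u k1" "\<not> E k0 v"
        using P[of 0 1] P[of 1 2] P[of 2 3] P[of 0 2] P[of 1 3] by (simp_all add: gg_def kdefs 1)
      have "has_induced_C V E 6"
        by (rule C6I[OF g, of u k0 k1 v bb a])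
           (simp_all add: nonE Ecomm memb[simplified Ecomm] kV[simplified Ecomm] kK[simplified Ecomm] a[simplified Ecomm] bb[simplified Ecomm] pe[simplified Ecomm] sa[simplified Ecomm] nav[simplified Ecomm] ab[simplified Ecomm] nuv[simplified Ecomm])
      then show False using noC6 by blast
    next
      case 2
      have kK: "k0 \<in> K" "k1 \<in> K" "k2 \<in> K" using fK 2 unfolding kdefs by auto
      have kV: "k0 \<in> V" "k1 \<in> V" "k2 \<in> V" using kK KV by auto
      have pe: "E u k0" "E k0 k1" "E k1 k2" "E k2 v"
        "\<not> E u k1" "\<not> E u k2" "\<not> E k0 k2" "\<not> E k0 v" "\<not> E k1 v"
        using P[of 0 1] P[of 1 2] P[of 2 3] P[of 3 4] P[of 0 2] P[of 0 3] P[of 1 3] P[of 1 4] P[of 2 4]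
        by (simp_all add: gg_def kdefs 2)
      have "has_induced_C V E 7"
        by (rule C7I[OF g, of u k0 k1 k2 v bb a])
           (simp_all add: nonE Ecomm memb[simplified Ecomm] kV[simplified Ecomm] kK[simplified Ecomm] a[simplified Ecomm] bb[simplified Ecomm] pe[simplified Ecomm] sa[simplified Ecomm] nav[simplified Ecomm] ab[simplified Ecomm] nuv[simplified Ecomm])
      then show False using noC7 by blast
    next
      case 3
      have kK: "k0 \<in> K" "k1 \<in> K" "k2 \<in> K" "k3 \<in> K" using fK 3 unfolding kdefs by auto
      have kV: "k0 \<in> V" "k1 \<in> V" "k2 \<in> V" "k3 \<in> V" using kK KV by auto
      have pe: "E u k0" "E k0 k1" "E k1 k2" "E k2 k3" "E k3 v"
        "\<not> E u k1" "\<not> E u k2" "\<not> E u k3" "\<not> E k0 k2" "\<not> E k0 k3" "\<not> E k0 v"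
        "\<not> E k1 k3" "\<not> E k1 v" "\<not> E k2 v"
        using P[of 0 1] P[of 1 2] P[of 2 3] P[of 3 4] P[of 4 5] P[of 0 2] P[of 0 3] P[of 0 4]
          P[of 1 3] P[of 1 4] P[of 1 5] P[of 2 4] P[of 2 5] P[of 3 5]
        by (simp_all add: gg_def kdefs 3)
      have "has_induced_P V E 7"
        by (rule P7I[OF g, of a u k0 k1 k2 k3 v])
           (simp_all add: nonE Ecomm memb[simplified Ecomm] kV[simplified Ecomm] kK[simplified Ecomm] a[simplified Ecomm] bb[simplified Ecomm] pe[simplified Ecomm] sa[simplified Ecomm] nav[simplified Ecomm] ab[simplified Ecomm] nuv[simplified Ecomm])
      then show False using noP7 by blast
    qed
  qed
qed
end
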